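(* For any ultradiscrete ballean $(X,\mathcal E_X)$ we have $\operatorname{add}(\mathcal B_X)<\operatorname{cof}(\mathcal B_X)$.
   Context: A ballean is a pair $(X,\mathcal E_X)$ where $X$ is a set and $\mathcal E_X$ is a family of subsets of $X\times X$ (entourages) such that: each $E\in\mathcal E_X$ contains the diagonal $\Delta_X$; for any $E,F\in\mathcal E_X$ there is $D\in\mathcal E_X$ with $E\circ F^{-1}\subset D$; and $\bigcup\mathcal E_X=X\times X$. For $E\in\mathcal E_X$, $x\in X$, $A\subset X$: $E[x]=\{y:(x,y)\in E\}$, $E[A]=\bigcup_{a\in A}E[a]$. $B\subset X$ is bounded if $B\subset E[x]$ for some $E\in\mathcal E_X$, $x\in X$; $\mathcal B_X$ is the family of bounded sets, ordered by inclusion. Sets $A,B$ are asymptotically disjoint if $E[A]\cap E[B]\in\mathcal B_X$ for all $E\in\mathcal E_X$. $X$ is ultranormal if it contains no two unbounded asymptotically disjoint sets. $X$ is discrete if $X$ is unbounded and for every $E\in\mathcal E_X$ there is a bounded $B_E\subset X$ with $E[x]=\{x\}$ for all $x\in X\setminus B_E$; ultradiscrete means discrete and ultranormal. For a poset $P$, $\operatorname{add}(P)$ is the least cardinality of a subset without upper bound and $\operatorname{cof}(P)$ the least cardinality of a cofinal subset. *)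

theory Defs
  imports Main
begin

unbundle cardinal_syntax

definition ballean :: "'a set \<Rightarrow> ('a \<times> 'a) set set \<Rightarrow> bool" where
  "ballean X \<E> \<longleftrightarrow>
     (\<forall>E\<in>\<E>. E \<subseteq> X \<times> X \<and> Id_on X \<subseteq> E) \<and>
     (\<forall>E\<in>\<E>. \<forall>F\<in>\<E>. \<exists>D\<in>\<E>. E O F\<inverse> \<subseteq> D) \<and>
     \<Union>\<E> = X \<times> X"

definition bounded_in :: "'a set \<Rightarrow> ('a \<times> 'a) set set \<Rightarrow> 'a set \<Rightarrow> bool" where
  "bounded_in X \<E> B \<longleftrightarrow> (\<exists>E\<in>\<E>. \<exists>x\<in>X. B \<subseteq> E `` {x})"

definition bounded_sets :: "'a set \<Rightarrow> ('a \<times> 'a) set set \<Rightarrow> 'a set set" where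
  "bounded_sets X \<E> = {B. B \<subseteq> X \<and> bounded_in X \<E> B}"

definition asymp_disjoint :: "'a set \<Rightarrow> ('a \<times> 'a) set set \<Rightarrow> 'a set \<Rightarrow> 'a set \<Rightarrow> bool" where
  "asymp_disjoint X \<E> A B \<longleftrightarrow> (\<forall>E\<in>\<E>. bounded_in X \<E> (E `` A \<inter> E `` B))"

definition ultranormal :: "'a set \<Rightarrow> ('a \<times> 'a) set set \<Rightarrow> bool" where
  "ultranormal X \<E> \<longleftrightarrow>
     \<not> (\<exists>A B. A \<subseteq> X \<and> B \<subseteq> X \<and> \<not> bounded_in X \<E> A \<and> \<not> bounded_in X \<E> B
              \<and> asymp_disjoint X \<E> A B)"

definition discrete_ballean :: "'a set \<Rightarrow> ('a \<times> 'a) set set \<Rightarrow> bool" where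
  "discrete_ballean X \<E> \<longleftrightarrow> \<not> bounded_in X \<E> X \<and>
     (\<forall>E\<in>\<E>. \<exists>B. B \<subseteq> X \<and> bounded_in X \<E> B \<and> (\<forall>x\<in>X - B. E `` {x} = {x}))"

definition ultradiscrete :: "'a set \<Rightarrow> ('a \<times> 'a) set set \<Rightarrow> bool" where
  "ultradiscrete X \<E> \<longleftrightarrow> discrete_ballean X \<E> \<and> ultranormal X \<E>"

definition no_upper_bound :: "'b set set \<Rightarrow> 'b set set \<Rightarrow> bool" where
  "no_upper_bound P A \<longleftrightarrow> A \<subseteq> P \<and> \<not> (\<exists>U\<in>P. \<forall>a\<in>A. a \<subseteq> U)"

definition cofinal_in :: "'b set set \<Rightarrow> 'b set set \<Rightarrow> bool" where
  "cofinal_in P C \<longleftrightarrow> C \<subseteq> P \<and> (\<forall>p\<in>P. \<exists>c\<in>C. p \<subseteq> c)"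

text \<open>add(P) < cof(P): some subfamily without upper bound is of strictly smaller
  cardinality than every cofinal subfamily (the minima defining add and cof exist since
  cardinals are well-ordered).\<close>
definition add_lt_cof :: "'b set set \<Rightarrow> bool" where
  "add_lt_cof P \<longleftrightarrow> (\<exists>A. no_upper_bound P A \<and> (\<forall>C. cofinal_in P C \<longrightarrow> ordLess2 (card_of A) (card_of C)))"

end

theory Submission
  imports Defs
begin

lemma wo_facts:
  assumes "Well_order r"
  shows "\<And>a. a \<in> Field r \<Longrightarrow> (a,a) \<in> r"
    and "\<And>a b c. (a,b) \<in> r \<Longrightarrow> (b,c) \<in> r \<Longrightarrow> (a,c) \<in> r"
    and "\<And>a b. (a,b) \<in> r \<Longrightarrow> (b,a) \<in> r \<Longrightarrow> a = b"
    and "\<And>a b. a \<in> Field r \<Longrightarrow> b \<in> Field r \<Longrightarrow> (a,b) \<in> r \<or> (b,a) \<in> r"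
    and "wf (r - Id)"
proof -
  have L: "linear_order_on (Field r) r" and WF: "wf (r - Id)"
    using assms unfolding well_order_on_def by blast+
  then have R: "refl_on (Field r) r" and T: "trans r" and A: "antisym r" and To: "total_on (Field r) r"
    unfolding linear_order_on_def partial_order_on_def preorder_on_def by blast+
  show "\<And>a. a \<in> Field r \<Longrightarrow> (a,a) \<in> r" using R by (simp add: refl_on_def)
  show "\<And>a b c. (a,b) \<in> r \<Longrightarrow> (b,c) \<in> r \<Longrightarrow> (a,c) \<in> r" using T by (rule transD)
  show "\<And>a b. (a,b) \<in> r \<Longrightarrow> (b,a) \<in> r \<Longrightarrow> a = b" using A by (rule antisymD)
  show "\<And>a b. a \<in> Field r \<Longrightarrow> b \<in> Field r \<Longrightarrow> (a,b) \<in> r \<or> (b,a) \<in> r"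
    using To R by (metis refl_on_def total_on_def)
  show "wf (r - Id)" by (rule WF)
qed

lemma wo_min:
  assumes "Well_order r" "M \<subseteq> Field r" "M \<noteq> {}"
  shows "\<exists>m\<in>M. \<forall>m'\<in>M. (m,m') \<in> r"
proof -
  from wo_facts(5)[OF assms(1)] assms(3) obtain m where m: "m \<in> M" "\<forall>y. (y,m) \<in> r - Id \<longrightarrow> y \<notin> M"
    by (metis ex_in_conv wfE_min)
  have "\<forall>m'\<in>M. (m,m') \<in> r"
  proof
    fix m' assume "m' \<in> M"
    then show "(m,m') \<in> r" using m wo_facts(1,4)[OF assms(1)] assms(2) by (cases "m = m'") blast+
  qed
  with m show ?thesis by blast
qed


lemma no_ultra_wo:
  assumes W: "Well_order r" and JF: "J \<subseteq> Field r" and JNE: "J \<noteq> {}"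
    and unb: "\<forall>c\<in>Field r. \<exists>j\<in>J. (j,c) \<notin> r"
    and ultra: "\<forall>S\<subseteq>J. (\<exists>c\<in>Field r. \<forall>s\<in>S. (s,c)\<in>r) \<or> (\<exists>c\<in>Field r. \<forall>s\<in>J-S. (s,c)\<in>r)"
  shows False
proof -
  note refl = wo_facts(1)[OF W] and tr = wo_facts(2)[OF W] and anti = wo_facts(3)[OF W]
    and tot = wo_facts(4)[OF W]
  define P where "P j m \<longleftrightarrow> m\<in>J \<and> (j,m)\<in>r \<and> m\<noteq>j \<and> (\<forall>m'\<in>J. (j,m')\<in>r \<and> m'\<noteq>j \<longrightarrow> (m,m')\<in>r)" for j m
  define sc where "sc j = (SOME m. P j m)" for j
  have scP: "P j (sc j)" if "j \<in> J" for j
  proof -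
    have jF: "j \<in> Field r" using that JF by blast
    obtain j' where j': "j' \<in> J" "(j',j) \<notin> r" using unb jF by blast
    have j'F: "j' \<in> Field r" using j' JF by blast
    have "(j,j') \<in> r" using tot[OF jF j'F] j'(2) by blast
    moreover have "j' \<noteq> j" using j'(2) refl[OF jF] by blast
    ultimately have "(j,j') \<in> r" "j' \<noteq> j" by blast+
    then have "{m\<in>J. (j,m)\<in>r \<and> m\<noteq>j} \<noteq> {}" using j' by blast
    from wo_min[OF W _ this] JF obtain m where "m \<in> {m\<in>J. (j,m)\<in>r \<and> m\<noteq>j}"
      "\<forall>m'\<in>{m\<in>J. (j,m)\<in>r \<and> m\<noteq>j}. (m,m')\<in>r" by blast
    then have "P j m" unfolding P_def by blast
    then show ?thesis unfolding sc_def by (rule someI)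
  qed
  have scJ: "sc j \<in> J" and scr: "(j, sc j) \<in> r" and scne: "sc j \<noteq> j"
    and scmin: "\<And>m'. m' \<in> J \<Longrightarrow> (j,m') \<in> r \<Longrightarrow> m' \<noteq> j \<Longrightarrow> (sc j, m') \<in> r"
    if "j \<in> J" for j using scP[OF that] unfolding P_def by blast+
  define T where "T = sc ` J"
  have TJ: "T \<subseteq> J" using scJ T_def by blast
  have Tunb: "\<not> (\<exists>c\<in>Field r. \<forall>s\<in>T. (s,c)\<in>r)"
  proof
    assume "\<exists>c\<in>Field r. \<forall>s\<in>T. (s,c)\<in>r"
    then obtain c where c: "c \<in> Field r" "\<forall>s\<in>T. (s,c)\<in>r" by blast
    obtain j where j: "j \<in> J" "(j,c) \<notin> r" using unb c by blast
    have "sc j \<in> T" using j T_def by blast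
    then have "(sc j, c) \<in> r" using c by blast
    then show False using tr[OF scr[OF j(1)]] j by blast
  qed
  from ultra TJ Tunb obtain c0 where c0: "c0 \<in> Field r" "\<forall>s\<in>J-T. (s,c0)\<in>r" by blast
  obtain j0 where j0: "j0 \<in> J" "(j0,c0) \<notin> r" using unb c0 by blast
  have j0F: "j0 \<in> Field r" using j0 JF by blast
  have c0j0: "(c0,j0) \<in> r" using tot[OF c0(1) j0F] j0 by blast
  have iterJ: "(sc ^^ n) j0 \<in> J" for n by (induction n) (auto simp: j0 scJ)
  have itall: "m \<in> J \<Longrightarrow> (j0,m) \<in> r \<Longrightarrow> (\<exists>n. m = (sc ^^ n) j0)" for m
  proof (induction m rule: wf_induct[OF wo_facts(5)[OF W]])
    case (1 m)
    note IH = 1(1) and mJ = 1(2) and jm = 1(3)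
    show "\<exists>n. m = (sc ^^ n) j0"
    proof (cases "m = j0")
      case True then show ?thesis by (metis funpow_0)
    next
      case False
      have "m \<notin> J - T"
      proof
        assume "m \<in> J - T"
        then have "(m,c0) \<in> r" using c0 by blast
        then have "(m,j0) \<in> r" using tr[OF _ c0j0] by blast
        then show False using anti jm False by blast
      qed
      then obtain i where i: "i \<in> J" "m = sc i" using mJ T_def by blast
      have ij0: "(j0,i) \<in> r"
      proof (rule ccontr)
        assume "(j0,i) \<notin> r"
        moreover have iF: "i \<in> Field r" using i JF by blast
        ultimately have ij: "(i,j0) \<in> r" using tot[OF iF j0F] by blast
        have "i \<noteq> j0" using \<open>(j0,i) \<notin> r\<close> refl[OF j0F] by blast
        note ij this
        then have "(m,j0) \<in> r" using scmin[OF i(1) j0(1)] i by blast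
        then show False using anti jm False by blast
      qed
      have "(i,m) \<in> r - Id" using scr[OF i(1)] scne[OF i(1)] i by auto
      then obtain n where "i = (sc ^^ n) j0" using IH i ij0 by blast
      then have "m = (sc ^^ Suc n) j0" using i by simp
      then show ?thesis by blast
    qed
  qed
  have mono1: "((sc ^^ a) j0, (sc ^^ (a+k)) j0) \<in> r" for a k
  proof (induction k)
    case 0 have "(sc ^^ a) j0 \<in> Field r" using iterJ JF by blast
    then show ?case using refl by simp
  next
    case (Suc k) then show ?case using tr[OF Suc scr[OF iterJ[of "a+k"]]] by simp
  qed
  have strict: "(sc ^^ a) j0 \<noteq> (sc ^^ (a + Suc k)) j0" for a k
  proof
    assume eq: "(sc ^^ a) j0 = (sc ^^ (a + Suc k)) j0"
    have m1: "((sc ^^ Suc a) j0, (sc ^^ (Suc a + k)) j0) \<in> r" by (rule mono1)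
    have e1: "(sc ^^ Suc a) j0 = sc ((sc ^^ a) j0)" by simp
    have e2: "(sc ^^ (Suc a + k)) j0 = (sc ^^ a) j0" using eq by (simp only: add_Suc add_Suc_right)
    have "(sc ((sc ^^ a) j0), (sc ^^ a) j0) \<in> r" using m1 unfolding e1 e2 .
    moreover have "((sc ^^ a) j0, sc ((sc ^^ a) j0)) \<in> r" using scr[OF iterJ[of a]] .
    ultimately show False using anti scne[OF iterJ[of a]] by blast
  qed
  have inj: "(sc ^^ a) j0 \<noteq> (sc ^^ b) j0" if "a \<noteq> b" for a b
  proof (cases "a < b")
    case True
    then obtain k where k0: "b = Suc (a + k)" using less_imp_Suc_add by blast
    then have k: "b = a + Suc k" by simp
    have "(sc ^^ a) j0 \<noteq> (sc ^^ (a + Suc k)) j0" by (rule strict)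
    then show ?thesis unfolding k .
  next
    case False
    then have "b < a" using that by simp
    then obtain k where k0: "a = Suc (b + k)" using less_imp_Suc_add by blast
    then have k: "a = b + Suc k" by simp
    have "(sc ^^ b) j0 \<noteq> (sc ^^ (b + Suc k)) j0" by (rule strict)
    then show ?thesis unfolding k by (rule not_sym)
  qed
  define S where "S = {m. \<exists>n. m = (sc ^^ (2*n)) j0}"
  have SJ: "S \<subseteq> J" unfolding S_def using iterJ by auto
  have above: "\<exists>n. ((sc ^^ n) j0, c) \<notin> r" if cF: "c \<in> Field r" for c
  proof -
    obtain m where m: "m \<in> J" "(m,c) \<notin> r" using bspec[OF unb cF] by blast
    show ?thesis
    proof (cases "(j0,m) \<in> r")
      case True
      then obtain n where n: "m = (sc ^^ n) j0" using itall m(1) by blast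
      have "((sc ^^ n) j0, c) \<notin> r" using m(2) unfolding n .
      then show ?thesis by blast
    next
      case False
      moreover have "m \<in> Field r" using m JF by blast
      ultimately have "(m,j0) \<in> r" using tot[OF _ j0F, of m] by blast
      then have "(j0,c) \<notin> r" using tr[of m j0 c] m by blast
      then have "((sc ^^ 0) j0, c) \<notin> r" by simp
      then show ?thesis by blast
    qed
  qed
  have above2: "((sc ^^ Suc n) j0, c) \<notin> r" if "((sc ^^ n) j0, c) \<notin> r" for n c
  proof
    assume "((sc ^^ Suc n) j0, c) \<in> r"
    then have "(sc ((sc ^^ n) j0), c) \<in> r" by simp
    from tr[OF scr[OF iterJ[of n]] this] that show False by blast
  qed
  have Sunb: "\<not> (\<exists>c\<in>Field r. \<forall>s\<in>S. (s,c)\<in>r)"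
  proof
    assume "\<exists>c\<in>Field r. \<forall>s\<in>S. (s,c)\<in>r"
    then obtain c where c: "c \<in> Field r" "\<forall>s\<in>S. (s,c)\<in>r" by blast
    obtain n where n: "((sc ^^ n) j0, c) \<notin> r" using above c by blast
    show False
    proof (cases "even n")
      case True
      then obtain k where "n = 2*k" by blast
      then show False using c n S_def by blast
    next
      case False
      then obtain k where k: "n = 2*k+1" using oddE by blast
      have "((sc ^^ (2*(k+1))) j0, c) \<notin> r" using above2[OF n] k by simp
      then show False using c S_def by blast
    qed
  qed
  have Cunb: "\<not> (\<exists>c\<in>Field r. \<forall>s\<in>J-S. (s,c)\<in>r)"
  proof
    assume "\<exists>c\<in>Field r. \<forall>s\<in>J-S. (s,c)\<in>r"
    then obtain c where c: "c \<in> Field r" "\<forall>s\<in>J-S. (s,c)\<in>r" by blast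
    obtain n where n: "((sc ^^ n) j0, c) \<notin> r" using above c by blast
    obtain k where k: "((sc ^^ (2*k+1)) j0, c) \<notin> r"
    proof (cases "even n")
      case True
      then obtain k where "n = 2*k" by blast
      then show ?thesis using that above2[OF n] by simp
    next
      case False
      then obtain k where k: "n = 2*k+1" using oddE by blast
      then show ?thesis using that n by blast
    qed
    have "(sc ^^ (2*k+1)) j0 \<notin> S"
    proof
      assume "(sc ^^ (2*k+1)) j0 \<in> S"
      then obtain n' where "(sc ^^ (2*k+1)) j0 = (sc ^^ (2*n')) j0" using S_def by blast
      moreover have "2*k+1 \<noteq> 2*n'" by presburger
      ultimately show False using inj by blast
    qed
    then show False using c k iterJ by blast
  qed
  show False using ultra SJ Sunb Cunb by blast
qed


lemma ent_ax:
  assumes B: "ballean X \<E>" and E: "E \<in> \<E>"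
  shows "E \<subseteq> X \<times> X" "Id_on X \<subseteq> E"
proof -
  have "\<forall>E\<in>\<E>. E \<subseteq> X \<times> X \<and> Id_on X \<subseteq> E" using B unfolding ballean_def by (elim conjE)
  then show "E \<subseteq> X \<times> X" "Id_on X \<subseteq> E" using E by blast+
qed

lemma ent_cover:
  assumes B: "ballean X \<E>" and x: "x \<in> X" and y: "y \<in> X"
  shows "\<exists>G\<in>\<E>. (x,y) \<in> G"
proof -
  have "\<Union>\<E> = X \<times> X" using B unfolding ballean_def by (elim conjE)
  then have "(x,y) \<in> \<Union>\<E>" using x y by simp
  then show ?thesis by blast
qed

lemma ent_ax2:
  assumes B: "ballean X \<E>" and E: "E \<in> \<E>" and F: "F \<in> \<E>"
  shows "\<exists>D\<in>\<E>. E O F\<inverse> \<subseteq> D"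
proof -
  have "\<forall>E\<in>\<E>. \<forall>F\<in>\<E>. \<exists>D\<in>\<E>. E O F\<inverse> \<subseteq> D" using B unfolding ballean_def by (elim conjE)
  then show ?thesis using E F by blast
qed

lemma comp_ent:
  assumes B: "ballean X \<E>" and E: "E \<in> \<E>" and F: "F \<in> \<E>"
  shows "\<exists>D\<in>\<E>. E O F \<subseteq> D"
proof -
  obtain D2 where D2: "D2 \<in> \<E>" "F O F\<inverse> \<subseteq> D2" using ent_ax2[OF B F F] by blast
  have FX: "F \<subseteq> X \<times> X" and FI: "Id_on X \<subseteq> F" using ent_ax[OF B F] by blast+
  have "F\<inverse> \<subseteq> D2"
  proof
    fix p assume "p \<in> F\<inverse>"
    then obtain a c where p: "p = (a,c)" "(c,a) \<in> F" by auto
    then have "a \<in> X" using FX by blast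
    then have "(a,a) \<in> F" using FI by (auto simp: Id_on_def)
    then have "(a,c) \<in> F O F\<inverse>" using p by blast
    then show "p \<in> D2" using p D2 by blast
  qed
  then have "E O F \<subseteq> E O D2\<inverse>" by blast
  moreover obtain D3 where "D3 \<in> \<E>" "E O D2\<inverse> \<subseteq> D3" using ent_ax2[OF B E D2(1)] by blast
  ultimately show ?thesis by blast
qed

lemma union_ent:
  assumes B: "ballean X \<E>" and E: "E \<in> \<E>" and F: "F \<in> \<E>"
  shows "\<exists>D\<in>\<E>. E \<union> F \<subseteq> D"
proof -
  obtain D1 where D1: "D1 \<in> \<E>" "E O E\<inverse> \<subseteq> D1" using ent_ax2[OF B E E] by blast
  obtain D where D: "D \<in> \<E>" "D1 O F \<subseteq> D" using comp_ent[OF B D1(1) F] by blast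
  have EX: "E \<subseteq> X \<times> X" and EI: "Id_on X \<subseteq> E" using ent_ax[OF B E] by blast+
  have FX: "F \<subseteq> X \<times> X" and FI: "Id_on X \<subseteq> F" using ent_ax[OF B F] by blast+
  have "E \<union> F \<subseteq> D1 O F"
  proof
    fix p assume p: "p \<in> E \<union> F"
    then obtain a z where az: "p = (a,z)" "a \<in> X" "z \<in> X" using EX FX by blast
    have aa: "(a,a) \<in> E" "(z,z) \<in> E" "(z,z) \<in> F" using az EI FI by (auto simp: Id_on_def)
    show "p \<in> D1 O F"
    proof (cases "p \<in> F")
      case True
      have "(a,a) \<in> E O E\<inverse>" using aa(1) by blast
      then have "(a,a) \<in> D1" using D1 by blast
      then show ?thesis using True az by blast
    next
      case False
      then have "(a,z) \<in> E" using p az by blast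
      then have "(a,z) \<in> E O E\<inverse>" using aa(2) by blast
      then have "(a,z) \<in> D1" using D1 by blast
      then show ?thesis using aa(3) az by blast
    qed
  qed
  then show ?thesis using D by blast
qed

lemma bounded_union:
  assumes B: "ballean X \<E>" and b1: "bounded_in X \<E> B1" and b2: "bounded_in X \<E> B2"
  shows "bounded_in X \<E> (B1 \<union> B2)"
proof -
  obtain E x where Ex: "E \<in> \<E>" "x \<in> X" "B1 \<subseteq> E `` {x}" using b1 unfolding bounded_in_def by blast
  obtain F y where Fy: "F \<in> \<E>" "y \<in> X" "B2 \<subseteq> F `` {y}" using b2 unfolding bounded_in_def by blast
  obtain G where G: "G \<in> \<E>" "(x,y) \<in> G" using ent_cover[OF B Ex(2) Fy(2)] by blast
  obtain H where H: "H \<in> \<E>" "G O F \<subseteq> H" using comp_ent[OF B G(1) Fy(1)] by blast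
  obtain D where D: "D \<in> \<E>" "E \<union> H \<subseteq> D" using union_ent[OF B Ex(1) H(1)] by blast
  have "B2 \<subseteq> H `` {x}" using Fy G H by blast
  then have "B1 \<union> B2 \<subseteq> D `` {x}" using Ex D by blast
  then show ?thesis unfolding bounded_in_def using D Ex by blast
qed

lemma bounded_subset: "bounded_in X \<E> B \<Longrightarrow> A \<subseteq> B \<Longrightarrow> bounded_in X \<E> A"
  unfolding bounded_in_def by blast

lemma bounded_single:
  assumes B: "ballean X \<E>" and x: "x \<in> X" shows "bounded_in X \<E> {x}"
proof -
  obtain E where "E \<in> \<E>" "(x,x) \<in> E" using ent_cover[OF B x x] by blast
  then show ?thesis unfolding bounded_in_def using x by blast
qed

lemma bounded_image:
  assumes B: "ballean X \<E>" and E: "E \<in> \<E>" and b: "bounded_in X \<E> A"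
  shows "bounded_in X \<E> (E `` A)"
proof -
  obtain F x where Fx: "F \<in> \<E>" "x \<in> X" "A \<subseteq> F `` {x}" using b unfolding bounded_in_def by blast
  obtain D where D: "D \<in> \<E>" "F O E \<subseteq> D" using comp_ent[OF B Fx(1) E] by blast
  have "E `` A \<subseteq> D `` {x}" using Fx D by blast
  then show ?thesis unfolding bounded_in_def using D Fx by blast
qed

lemma disjoint_one_bounded:
  assumes B: "ballean X \<E>" and U: "ultradiscrete X \<E>"
    and AX: "A \<subseteq> X" and CX: "C \<subseteq> X" and disj: "A \<inter> C = {}"
  shows "bounded_in X \<E> A \<or> bounded_in X \<E> C"
proof -
  have "asymp_disjoint X \<E> A C"
    unfolding asymp_disjoint_def
  proof
    fix E assume E: "E \<in> \<E>"
    obtain BE where BE: "BE \<subseteq> X" "bounded_in X \<E> BE" "\<forall>x\<in>X - BE. E `` {x} = {x}"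
      using U E unfolding ultradiscrete_def discrete_ballean_def by blast
    have "E `` A \<inter> E `` C \<subseteq> E `` BE"
    proof
      fix y assume "y \<in> E `` A \<inter> E `` C"
      then obtain a c where ac: "a \<in> A" "c \<in> C" "(a,y) \<in> E" "(c,y) \<in> E" by blast
      show "y \<in> E `` BE"
      proof (cases "a \<in> BE \<or> c \<in> BE")
        case True then show ?thesis using ac by blast
      next
        case False
        then have "E `` {a} = {a}" "E `` {c} = {c}" using BE ac AX CX by blast+
        then have "y = a" "y = c" using ac by blast+
        then show ?thesis using ac disj by blast
      qed
    qed
    then show "bounded_in X \<E> (E `` A \<inter> E `` C)"
      using bounded_subset bounded_image[OF B E BE(2)] by blast
  qed
  then show ?thesis using U AX CX unfolding ultradiscrete_def ultranormal_def by blast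
qed


theorem proposition6p2:
  fixes X :: "'a set" and \<E> :: "('a \<times> 'a) set set"
  assumes "ballean X \<E>" and "ultradiscrete X \<E>"
  shows "add_lt_cof (bounded_sets X \<E>)"
proof -
  note B = assms(1) and U = assms(2)
  define P where "P = bounded_sets X \<E>"
  have Xne: "X \<noteq> {}"
  proof
    assume X0: "X = {}"
    have nb: "\<not> bounded_in X \<E> {}" using X0 unfolding bounded_in_def by blast
    then have "\<not> asymp_disjoint X \<E> {} {}" using U unfolding ultradiscrete_def ultranormal_def by blast
    then obtain E where "E \<in> \<E>" unfolding asymp_disjoint_def by blast
    then obtain BE where "bounded_in X \<E> BE"
      using U unfolding ultradiscrete_def discrete_ballean_def by blast
    then show False using X0 unfolding bounded_in_def by blast
  qed
  define R where "R = {|C| | C. cofinal_in P C}"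
  have "cofinal_in P P" unfolding cofinal_in_def by blast
  then have "R \<noteq> {}" unfolding R_def by blast
  moreover have "\<forall>r\<in>R. Well_order r" unfolding R_def using card_of_Well_order by blast
  ultimately obtain r0 where r0: "r0 \<in> R" "\<forall>r'\<in>R. r0 \<le>o r'" using exists_minim_Well_order by blast
  then obtain C0 where C0: "r0 = |C0|" "cofinal_in P C0" unfolding R_def by blast
  have C0min: "|C0| \<le>o |C|" if cC: "cofinal_in P C" for C
  proof -
    have "|C| \<in> R" unfolding R_def using cC by blast
    then have "r0 \<le>o |C|" using r0(2) by blast
    then show ?thesis using C0(1) by simp
  qed
  have C0P: "C0 \<subseteq> P" and C0cof: "\<forall>p\<in>P. \<exists>c\<in>C0. p \<subseteq> c" using C0 unfolding cofinal_in_def by blast+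
  have key: "\<exists>A. no_upper_bound P A \<and> |A| <o |C0|"
  proof (rule ccontr)
    assume "\<not> ?thesis"
    then have H: "\<And>A. A \<subseteq> P \<Longrightarrow> |A| <o |C0| \<Longrightarrow> \<exists>U\<in>P. \<forall>a\<in>A. a \<subseteq> U"
      unfolding no_upper_bound_def by blast
    define r where "r = |C0|"
    have W: "Well_order r" unfolding r_def by (rule card_of_Well_order)
    have Fr: "Field r = C0" unfolding r_def by (rule Field_card_of)
    have Pbd: "p \<subseteq> X \<and> bounded_in X \<E> p" if "p \<in> P" for p
      using that unfolding P_def bounded_sets_def by simp
    have seg: "bounded_in X \<E> (\<Union> (under r c))" if c: "c \<in> C0" for c
    proof -
      have cF: "c \<in> Field r" using c Fr by simp
      have "|underS r c| <o r" unfolding r_def by (rule card_of_underS[OF card_of_Card_order cF[unfolded r_def]])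
      moreover have "underS r c \<subseteq> Field r" by (rule Order_Relation.underS_Field)
      then have "underS r c \<subseteq> P" using C0P Fr by simp
      ultimately obtain V where V: "V \<in> P" "\<forall>a\<in>underS r c. a \<subseteq> V" using H unfolding r_def by blast
      have "\<Union> (under r c) \<subseteq> V \<union> c" using V unfolding under_def underS_def by blast
      moreover have "bounded_in X \<E> (V \<union> c)"
        using bounded_union[OF B] Pbd V(1) C0P c by blast
      ultimately show ?thesis using bounded_subset by blast
    qed
    define f where "f x = (SOME c. c \<in> C0 \<and> x \<in> c \<and> (\<forall>c'\<in>C0. x \<in> c' \<longrightarrow> (c,c') \<in> r))" for x
    have fP: "f x \<in> C0 \<and> x \<in> f x \<and> (\<forall>c'\<in>C0. x \<in> c' \<longrightarrow> (f x,c') \<in> r)" if x: "x \<in> X" for x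
    proof -
      have "{x} \<in> P" unfolding P_def bounded_sets_def using bounded_single[OF B x] x by blast
      then obtain c where "c \<in> C0" "x \<in> c" using C0cof by blast
      then have "{c\<in>C0. x \<in> c} \<noteq> {}" by blast
      from wo_min[OF W _ this] Fr obtain m where "m \<in> {c\<in>C0. x \<in> c}" "\<forall>c'\<in>{c\<in>C0. x \<in> c}. (m,c') \<in> r"
        by blast
      then have "m \<in> C0 \<and> x \<in> m \<and> (\<forall>c'\<in>C0. x \<in> c' \<longrightarrow> (m,c') \<in> r)" by blast
      then show ?thesis unfolding f_def by (rule someI)
    qed
    define J where "J = f ` X"
    have JF: "J \<subseteq> Field r" using fP Fr J_def by blast
    have JNE: "J \<noteq> {}" using Xne J_def by blast
    have pre: "\<exists>c\<in>Field r. \<forall>s\<in>S. (s,c)\<in>r" if S: "S \<subseteq> J" and bd: "bounded_in X \<E> {x\<in>X. f x \<in> S}" for S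
    proof -
      have "{x\<in>X. f x \<in> S} \<in> P" unfolding P_def bounded_sets_def using bd by blast
      then obtain c0 where c0: "c0 \<in> C0" "{x\<in>X. f x \<in> S} \<subseteq> c0" using C0cof by blast
      have "\<forall>s\<in>S. (s,c0)\<in>r"
      proof
        fix s assume "s \<in> S"
        then obtain x where "x \<in> X" "s = f x" using S J_def by blast
        then show "(s,c0) \<in> r" using fP c0 \<open>s \<in> S\<close> by blast
      qed
      then show ?thesis using c0 Fr by blast
    qed
    have unb: "\<forall>c\<in>Field r. \<exists>j\<in>J. (j,c) \<notin> r"
    proof (rule ccontr)
      assume "\<not> ?thesis"
      then obtain c where c: "c \<in> C0" "\<forall>j\<in>J. (j,c) \<in> r" using Fr by blast
      have "X \<subseteq> \<Union> (under r c)"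
      proof
        fix x assume x: "x \<in> X"
        then have "(f x, c) \<in> r" using c J_def by blast
        then show "x \<in> \<Union> (under r c)" using fP[OF x] unfolding under_def by blast
      qed
      then have "bounded_in X \<E> X" using seg[OF c(1)] bounded_subset by blast
      then show False using U unfolding ultradiscrete_def discrete_ballean_def by blast
    qed
    have ultra: "\<forall>S\<subseteq>J. (\<exists>c\<in>Field r. \<forall>s\<in>S. (s,c)\<in>r) \<or> (\<exists>c\<in>Field r. \<forall>s\<in>J-S. (s,c)\<in>r)"
    proof (intro allI impI)
      fix S assume S: "S \<subseteq> J"
      have "bounded_in X \<E> {x\<in>X. f x \<in> S} \<or> bounded_in X \<E> {x\<in>X. f x \<in> J - S}"
        by (rule disjoint_one_bounded[OF B U]) auto
      then show "(\<exists>c\<in>Field r. \<forall>s\<in>S. (s,c)\<in>r) \<or> (\<exists>c\<in>Field r. \<forall>s\<in>J-S. (s,c)\<in>r)"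
        using pre[OF S] pre[of "J - S"] by blast
    qed
    show False by (rule no_ultra_wo[OF W JF JNE unb ultra])
  qed
  then obtain A where A: "no_upper_bound P A" "|A| <o |C0|" by blast
  have "\<forall>C. cofinal_in P C \<longrightarrow> |A| <o |C|"
    using A(2) C0min ordLess_ordLeq_trans by blast
  then show ?thesis unfolding add_lt_cof_def P_def[symmetric] using A(1) by blast
qed

end
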